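(* Let $\psi^{(A)}$ and $\psi^{(B)}$ be neighbor functions and let $\sigma^{(A)},\sigma^{(B)}$ be positive numbers. Then $\psi^{(A)}$ and $\psi^{(B)}$ are continuously differentiable almost everywhere. Set $\sigma^*=1$ and define $\psi^*$ by $$\frac{d\psi^*(x)}{dx}=\min\left(\frac{1}{\sigma^{(A)}}\frac{d\psi^{(A)}(x)}{dx},\ \frac{1}{\sigma^{(B)}}\frac{d\psi^{(B)}(x)}{dx}\right),\qquad \psi^*(x)=\int_0^x\frac{d\psi^*(s)}{ds}\,ds.$$ Then $\psi^*$ is a neighbor function, and for every $x\geq 0$ we have $I_{\psi^{(A)},\sigma^{(A)}}(x)\subseteq I_{\psi^*,\sigma^*}(x)$ and $I_{\psi^{(B)},\sigma^{(B)}}(x)\subseteq I_{\psi^*,\sigma^*}(x)$.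
   Context: A neighbor function is a function $\psi:\mathbb{R}_{\geq 0}\to\mathbb{R}$ that is (i) strictly increasing, (ii) continuous, (iii) concave, and (iv) such that $g(x)=\psi(e^{x})$ is convex as a function of $x\in\mathbb{R}$. For a neighbor function $\psi$, a number $\sigma\geq 0$ and $y\geq 0$, the uncertainty interval around $y$ is $I_{\psi,\sigma}(y)=\big[\psi^{-1}(\max(\psi(0),\psi(y)-\sigma)),\ \psi^{-1}(\psi(y)+\sigma)\big]$. *)

theory Defs
  imports "HOL-Analysis.Analysis"
begin

definition neighbor_fn :: "(real \<Rightarrow> real) \<Rightarrow> bool" where
  "neighbor_fn \<psi> \<longleftrightarrow>
     strict_mono_on {0..} \<psi> \<and>
     continuous_on {0..} \<psi> \<and>
     concave_on {0..} \<psi> \<and>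
     convex_on UNIV (\<lambda>x. \<psi> (exp x))"

definition unc_interval :: "(real \<Rightarrow> real) \<Rightarrow> real \<Rightarrow> real \<Rightarrow> real set" where
  "unc_interval \<psi> \<sigma> y =
     {the_inv_into {0..} \<psi> (max (\<psi> 0) (\<psi> y - \<sigma>)) .. the_inv_into {0..} \<psi> (\<psi> y + \<sigma>)}"

definition c1_ae_on :: "real set \<Rightarrow> (real \<Rightarrow> real) \<Rightarrow> bool" where
  "c1_ae_on S f \<longleftrightarrow>
     (\<exists>N. N \<in> null_sets lborel \<and>
          (\<forall>x\<in>S - N. f differentiable (at x)) \<and>
          continuous_on (S - N) (deriv f))"

end

theory Submission
  imports Defs
begin


definition slp :: "(real \<Rightarrow> real) \<Rightarrow> real \<Rightarrow> real \<Rightarrow> real" where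
  "slp f a b = (f b - f a) / (b - a)"

lemma slp_sym: "slp f a b = slp f b a"
  unfolding slp_def by (smt (verit) minus_divide_divide)

lemma convex_slp_mono:
  assumes f: "convex_on C f" and C: "a \<in> C" "b \<in> C" "a' \<in> C" "b' \<in> C"
    and o: "a < b" "a' < b'" "a \<le> a'" "b \<le> b'"
  shows "slp f a b \<le> slp f a' b'"
proof -
  have 1: "slp f a b \<le> slp f a b'"
  proof (cases "b = b'")
    case False
    then have "b < b'" using o by simp
    from convex_on_slope_le(1)[OF f C(1) C(4) o(1) this] show ?thesis
      unfolding slp_def by (smt (verit) minus_divide_divide)
  qed simp
  have 2: "slp f a b' \<le> slp f a' b'"
  proof (cases "a = a'")
    case False
    then have "a < a'" using o by simp
    from convex_on_slope_le(2)[OF f C(1) C(4) this o(2)] show ?thesis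
      unfolding slp_def by (smt (verit) minus_divide_divide)
  qed simp
  from 1 2 show ?thesis by simp
qed

lemma concave_slp_mono:
  assumes f: "concave_on C f" and C: "a \<in> C" "b \<in> C" "a' \<in> C" "b' \<in> C"
    and o: "a < b" "a' < b'" "a \<le> a'" "b \<le> b'"
  shows "slp f a' b' \<le> slp f a b"
proof -
  have "convex_on C (\<lambda>x. - f x)" using f by (simp add: concave_on_def)
  from convex_slp_mono[OF this C o] show ?thesis
    unfolding slp_def by (simp add: diff_divide_distrib)
qed


locale cfun =
  fixes f :: "real \<Rightarrow> real"
  assumes conc: "concave_on {0..} f" and smono: "strict_mono_on {0..} f"
    and cont: "continuous_on {0..} f"
begin

definition dl :: "real \<Rightarrow> real" where "dl t = Inf ((\<lambda>s. slp f s t) ` {0..<t})"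
definition dr :: "real \<Rightarrow> real" where "dr t = Sup ((\<lambda>u. slp f t u) ` {t<..})"

lemma slp_pos: "0 \<le> a \<Longrightarrow> a < b \<Longrightarrow> slp f a b > 0"
  using smono unfolding slp_def strict_mono_on_def by auto

lemma cslp: "0 \<le> a \<Longrightarrow> a < b \<Longrightarrow> a' < b' \<Longrightarrow> a \<le> a' \<Longrightarrow> b \<le> b' \<Longrightarrow> slp f a' b' \<le> slp f a b"
  by (rule concave_slp_mono[OF conc]) auto

lemma dl_le: assumes "0 \<le> s" "s < t" shows "dl t \<le> slp f s t"
proof -
  have "bdd_below ((\<lambda>s. slp f s t) ` {0..<t})"
    by (rule bdd_belowI[of _ "slp f t (t+1)"]) (auto intro!: cslp)
  then show ?thesis unfolding dl_def using assms by (auto intro!: cInf_lower)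
qed

lemma dl_ge: assumes "0 < t" "\<And>s. 0 \<le> s \<Longrightarrow> s < t \<Longrightarrow> c \<le> slp f s t" shows "c \<le> dl t"
  unfolding dl_def using assms by (auto intro!: cInf_greatest)

lemma dr_ge: assumes "0 < t" "t < u" shows "slp f t u \<le> dr t"
proof -
  have "bdd_above ((\<lambda>u. slp f t u) ` {t<..})"
    by (rule bdd_aboveI[of _ "slp f 0 t"]) (use assms in \<open>auto intro!: cslp\<close>)
  then show ?thesis unfolding dr_def using assms by (auto intro!: cSup_upper)
qed

lemma dr_le: assumes "\<And>u. t < u \<Longrightarrow> slp f t u \<le> c" shows "dr t \<le> c"
  unfolding dr_def using assms by (auto intro!: cSup_least)

lemma dr_le_dl: assumes "0 < t" shows "dr t \<le> dl t"
proof (rule dl_ge[OF assms])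
  fix s assume s: "0 \<le> s" "s < t"
  show "dr t \<le> slp f s t"
    by (rule dr_le) (use s in \<open>auto intro!: cslp\<close>)
qed

lemma dl_le_dr: assumes "0 < t" "t < t'" shows "dl t' \<le> dr t"
proof -
  have "dl t' \<le> slp f t t'" using assms by (intro dl_le) auto
  also have "\<dots> \<le> dr t" using assms by (intro dr_ge) auto
  finally show ?thesis .
qed

lemma dl_pos: assumes "0 < t" shows "dl t > 0"
proof -
  have "0 < slp f t (t+1)" using assms by (intro slp_pos) auto
  also have "\<dots> \<le> dr t" using assms by (intro dr_ge) auto
  also have "\<dots> \<le> dl t" using assms by (rule dr_le_dl)
  finally show ?thesis .
qed

lemma dl_mono: assumes "0 < t" "t \<le> t'" shows "dl t' \<le> dl t"
proof (cases "t = t'")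
  case False
  then show ?thesis using dl_le_dr[of t t'] dr_le_dl[of t] assms by auto
qed simp


lemma isCont_f: "0 < x \<Longrightarrow> isCont f x"
  using continuous_on_interior[OF cont] by (simp add: interior_real_atLeast)

lemma isCont_slp1: "0 < x \<Longrightarrow> x \<noteq> s \<Longrightarrow> isCont (\<lambda>y. slp f s y) x"
  unfolding slp_def by (intro continuous_intros isCont_f) auto

lemma isCont_slp2: "0 < x \<Longrightarrow> x \<noteq> u \<Longrightarrow> isCont (\<lambda>y. slp f y u) x"
  unfolding slp_def by (intro continuous_intros isCont_f) auto

lemma has_deriv_dl:
  assumes t: "0 < t" and eq: "dr t = dl t"
  shows "(f has_real_derivative dl t) (at t)"
  unfolding has_field_derivative_iff
proof (rule LIM_I)
  fix r :: real assume r: "0 < r"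
  have ne1: "(\<lambda>s. slp f s t) ` {0..<t} \<noteq> {}" using t by auto
  have ne2: "(\<lambda>u. slp f t u) ` {t<..} \<noteq> {}" by auto
  obtain s where s: "0 \<le> s" "s < t" "slp f s t < dl t + r"
    using cInf_lessD[OF ne1, of "dl t + r"] r unfolding dl_def[symmetric] by (auto simp: dl_def)
  obtain u where u: "t < u" "dl t - r < slp f t u"
    using less_cSupD[OF ne2, of "dl t - r"] r eq unfolding dr_def by auto
  show "\<exists>d>0. \<forall>y. y \<noteq> t \<and> norm (y - t) < d \<longrightarrow> norm ((f y - f t) / (y - t) - dl t) < r"
  proof (intro exI[of _ "min (t - s) (u - t)"] conjI allI impI)
    show "0 < min (t - s) (u - t)" using s u by auto
    fix y assume y: "y \<noteq> t \<and> norm (y - t) < min (t - s) (u - t)"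
    have q: "(f y - f t) / (y - t) = slp f y t" "(f y - f t) / (y - t) = slp f t y"
      unfolding slp_def by (smt (verit) minus_divide_divide)+
    show "norm ((f y - f t) / (y - t) - dl t) < r"
    proof (cases "y < t")
      case True
      have "dl t \<le> slp f y t" using True y s by (intro dl_le) auto
      moreover have "slp f y t \<le> slp f s t" using True y s by (intro cslp) auto
      ultimately show ?thesis using s q by auto
    next
      case False
      then have yt: "t < y" using y by auto
      have "slp f t y \<le> dr t" using yt t by (intro dr_ge) auto
      moreover have "slp f t u \<le> slp f t y" using yt y u t by (intro cslp) auto
      ultimately show ?thesis using u q eq by auto
    qed
  qed
qed

definition NN :: "real set" where "NN = {t. 0 < t \<and> dr t \<noteq> dl t}"

lemma countable_NN: "countable NN"
proof -
  define q where "q t = (SOME q. q \<in> \<rat> \<and> dr t < q \<and> q < dl t)" for t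
  have q: "q t \<in> \<rat> \<and> dr t < q t \<and> q t < dl t" if "t \<in> NN" for t
  proof -
    have "dr t < dl t" using that dr_le_dl unfolding NN_def by force
    then obtain r where "r \<in> \<rat>" "dr t < r" "r < dl t" using Rats_dense_in_real by blast
    then show ?thesis unfolding q_def by (intro someI[of "\<lambda>q. q \<in> \<rat> \<and> dr t < q \<and> q < dl t" r]) auto
  qed
  have "inj_on q NN"
  proof (rule inj_onI)
    fix x y assume xy: "x \<in> NN" "y \<in> NN" "q x = q y"
    show "x = y"
    proof (rule ccontr)
      assume "x \<noteq> y"
      then consider "x < y" | "y < x" by linarith
      then show False
      proof cases
        case 1
        then have "dl y \<le> dr x" using xy by (intro dl_le_dr) (auto simp: NN_def)
        then show False using q[OF xy(1)] q[OF xy(2)] xy(3) by auto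
      next
        case 2
        then have "dl x \<le> dr y" using xy by (intro dl_le_dr) (auto simp: NN_def)
        then show False using q[OF xy(1)] q[OF xy(2)] xy(3) by auto
      qed
    qed
  qed
  moreover have "countable (q ` NN)"
    by (rule countable_subset[OF _ countable_rat]) (use q in auto)
  ultimately show ?thesis by (blast intro: countable_image_inj_on)
qed

lemma dl_cont:
  assumes x: "0 < x" and eq: "dr x = dl x" and r: "0 < r"
  shows "\<exists>d>0. \<forall>y. 0 < y \<longrightarrow> \<bar>y - x\<bar> < d \<longrightarrow> \<bar>dl y - dl x\<bar> < r"
proof -
  have ne1: "(\<lambda>s. slp f s x) ` {0..<x} \<noteq> {}" using x by auto
  have ne2: "(\<lambda>u. slp f x u) ` {x<..} \<noteq> {}" by auto
  obtain s where s: "0 \<le> s" "s < x" "slp f s x < dl x + r/2"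
    using cInf_lessD[OF ne1, of "dl x + r/2"] r by (auto simp: dl_def)
  obtain u where u: "x < u" "dl x - r/2 < slp f x u"
    using less_cSupD[OF ne2, of "dl x - r/2"] r eq unfolding dr_def by auto
  obtain d1 where d1: "d1 > 0" "\<And>y. \<bar>y - x\<bar> < d1 \<Longrightarrow> \<bar>slp f s y - slp f s x\<bar> < r/2"
    using isCont_slp1[OF x, of s] s r unfolding continuous_at_real_range
    by (metis half_gt_zero less_irrefl real_norm_def)
  obtain d2 where d2: "d2 > 0" "\<And>y. \<bar>y - x\<bar> < d2 \<Longrightarrow> \<bar>slp f y u - slp f x u\<bar> < r/2"
    using isCont_slp2[OF x, of u] u r unfolding continuous_at_real_range
    by (metis half_gt_zero less_irrefl real_norm_def)
  show ?thesis
  proof (intro exI[of _ "min (min d1 d2) (min (x - s) (u - x))"] conjI allI impI)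
    show "0 < min (min d1 d2) (min (x - s) (u - x))" using d1 d2 s u by auto
    fix y assume y: "0 < y" "\<bar>y - x\<bar> < min (min d1 d2) (min (x - s) (u - x))"
    consider "y < x" | "y = x" | "x < y" by linarith
    then show "\<bar>dl y - dl x\<bar> < r"
    proof cases
      case 1
      have "dl x \<le> dr y" using 1 y by (intro dl_le_dr) auto
      moreover have "dr y \<le> dl y" using y by (intro dr_le_dl) auto
      moreover have "dl y \<le> slp f s y" using 1 y s by (intro dl_le) auto
      moreover have "\<bar>slp f s y - slp f s x\<bar> < r/2" using y by (intro d1) auto
      ultimately show ?thesis using s by arith
    next
      case 3
      have "dl y \<le> dl x" using 3 x by (intro dl_mono) auto
      moreover have "dr y \<le> dl y" using y by (intro dr_le_dl) auto
      moreover have "slp f y u \<le> dr y" using 3 y by (intro dr_ge) auto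
      moreover have "\<bar>slp f y u - slp f x u\<bar> < r/2" using y by (intro d2) auto
      ultimately show ?thesis using u by arith
    qed (use r in auto)
  qed
qed

lemma dl_integrable: assumes "0 < a" shows "dl integrable_on {a..b}"
proof -
  have "mono_on {a..b} (\<lambda>x. - dl x)"
    by (rule mono_onI) (use assms dl_mono in auto)
  from integrable_neg[OF integrable_on_mono_on[OF this]] show ?thesis by simp
qed

lemma telescope:
  assumes a: "0 < a" and d: "0 < d" "d \<le> a"
  shows "integral {a..a + real k * d} dl \<le> f (a + (real k - 1) * d) - f (a - d)"
proof (induction k)
  case 0 then show ?case by simp
next
  case (Suc k)
  define p where "p = a + real k * d"
  define q where "q = a + real (Suc k) * d"
  define w where "w = a + (real k - 1) * d"
  have kd: "0 \<le> real k * d" using d by simp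
  have pq: "q = p + d" "w = p - d" unfolding p_def q_def w_def by (simp_all add: algebra_simps)
  have pp: "0 < p" using a kd unfolding p_def by linarith
  have o0: "0 \<le> w" using pq pp d a kd unfolding p_def by linarith
  have c: "integral {a..p} dl + integral {p..q} dl = integral {a..q} dl"
    by (rule Henstock_Kurzweil_Integration.integral_combine[where f=dl and a=a and c=p and b=q])
       (use d a kd pq pp in \<open>auto simp: p_def intro!: dl_integrable\<close>)
  have le: "\<And>x. x \<in> {p..q} \<Longrightarrow> dl x \<le> dl p" using pp by (auto intro!: dl_mono)
  have i1: "integral {p..q} dl \<le> integral {p..q} (\<lambda>_. dl p)"
    by (rule integral_le[OF dl_integrable[OF pp] integrable_const_ivl le])
  have i2: "integral {p..q} (\<lambda>_. dl p) = d * dl p"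
    using d pq by simp
  have i3: "dl p \<le> slp f w p" using o0 pq d by (intro dl_le) auto
  have i4: "d * slp f w p = f p - f w"
    unfolding slp_def using pq d by simp
  have i5: "d * dl p \<le> d * slp f w p" using i3 d by (intro mult_left_mono) auto
  have "integral {a..q} dl \<le> f p - f (a - d)"
    using Suc.IH c i1 i2 i4 i5 unfolding w_def[symmetric] p_def[symmetric] by linarith
  then show ?case unfolding p_def q_def by (simp add: algebra_simps)
qed


lemma ftc_le_aux:
  assumes a: "0 < a" "a \<le> b" and d: "0 < d" "d \<le> a"
  shows "integral {a..b} dl \<le> f b - f (a - d)"
proof -
  define x where "x = (b - a) / d"
  define k where "k = nat \<lceil>x\<rceil>"
  have x0: "0 \<le> x" using a d unfolding x_def by simp
  have kx: "real k = of_int \<lceil>x\<rceil>" unfolding k_def using x0 by simp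
  have k1: "x \<le> real k" "real k - 1 < x" unfolding kx by linarith+
  have k1': "b - a \<le> real k * d" "(real k - 1) * d < b - a"
    using k1 d unfolding x_def by (simp_all add: field_simps)
  have "integral {a..b} dl + integral {b..a + real k * d} dl = integral {a..a + real k * d} dl"
    by (rule Henstock_Kurzweil_Integration.integral_combine) (use a k1' in \<open>auto intro!: dl_integrable\<close>)
  moreover have "0 \<le> integral {b..a + real k * d} dl"
    by (rule integral_nonneg) (use a in \<open>auto intro!: dl_integrable less_imp_le[OF dl_pos]\<close>)
  moreover have "integral {a..a + real k * d} dl \<le> f (a + (real k - 1) * d) - f (a - d)"
    by (rule telescope) (use a d in auto)
  moreover have "f (a + (real k - 1) * d) \<le> f b"
  proof -
    have "0 \<le> a + (real k - 1) * d"
    proof (cases "k = 0")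
      case False then have "1 \<le> real k" by simp
      then have "0 \<le> (real k - 1) * d" using d by simp
      then show ?thesis using a by linarith
    qed (use a d in simp)
    moreover have "a + (real k - 1) * d < b" using k1' by linarith
    ultimately show ?thesis using smono a unfolding strict_mono_on_def by (auto intro: less_imp_le)
  qed
  ultimately show ?thesis by linarith
qed

lemma ftc_le:
  assumes a: "0 < a" "a \<le> b"
  shows "integral {a..b} dl \<le> f b - f a"
proof (rule ccontr)
  assume "\<not> ?thesis"
  then have e: "0 < integral {a..b} dl - (f b - f a)" by simp
  obtain \<eta> where \<eta>: "\<eta> > 0" "\<And>y. norm (y - a) < \<eta> \<Longrightarrow> \<bar>f y - f a\<bar> < integral {a..b} dl - (f b - f a)"
    using isCont_f[OF a(1)] e unfolding continuous_at_real_range by blast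
  define d where "d = min a (\<eta>/2)"
  have d: "0 < d" "d \<le> a" "d < \<eta>" using a \<eta> unfolding d_def by auto
  have "\<bar>f (a - d) - f a\<bar> < integral {a..b} dl - (f b - f a)" using d by (intro \<eta>) auto
  moreover have "integral {a..b} dl \<le> f b - f (a - d)" using a d by (intro ftc_le_aux) auto
  ultimately show False by linarith
qed

lemma tdl_mono:
  assumes lc: "convex_on UNIV (\<lambda>x. f (exp x))" and t: "0 < t" "t < t'"
  shows "t * dl t \<le> t' * dl t'"
proof -
  have key: "s * slp f s t \<le> t' * slp f s' t'" if st: "0 < s" "s < t" "t \<le> s'" "s' < t'" for s t s' t'
  proof -
    let ?g = "\<lambda>x. f (exp x)"
    have "slp ?g (ln s) (ln t) \<le> slp ?g (ln s') (ln t')"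
      by (rule convex_slp_mono[OF lc]) (use st in auto)
    moreover have "slp ?g (ln s) (ln t) = (f t - f s) / (ln t - ln s)"
      "slp ?g (ln s') (ln t') = (f t' - f s') / (ln t' - ln s')"
      using st unfolding slp_def by auto
    moreover have "s * slp f s t \<le> (f t - f s) / (ln t - ln s)"
    proof -
      have D: "0 < f t - f s" using smono st unfolding strict_mono_on_def by auto
      have L: "0 < ln t - ln s" using st by auto
      have "ln (t / s) \<le> t / s - 1" using st by (intro ln_le_minus_one) auto
      then have "s * (ln t - ln s) \<le> t - s" using st by (simp add: ln_div field_simps)
      then have "s * (f t - f s) * (ln t - ln s) \<le> (f t - f s) * (t - s)"
        using D by (metis mult.assoc mult.commute mult_left_mono less_imp_le)
      then show ?thesis unfolding slp_def using L st by (simp add: field_simps)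
    qed
    moreover have "(f t' - f s') / (ln t' - ln s') \<le> t' * slp f s' t'"
    proof -
      have D: "0 < f t' - f s'" using smono st unfolding strict_mono_on_def by auto
      have L: "0 < ln t' - ln s'" using st by auto
      have "ln (s' / t') \<le> s' / t' - 1" using st by (intro ln_le_minus_one) auto
      then have "t' - s' \<le> t' * (ln t' - ln s')" using st by (simp add: ln_div field_simps)
      then have "(f t' - f s') * (t' - s') \<le> t' * (f t' - f s') * (ln t' - ln s')"
        using D by (metis mult.assoc mult.commute mult_left_mono less_imp_le)
      then show ?thesis unfolding slp_def using L st by (simp add: field_simps)
    qed
    ultimately show ?thesis by linarith
  qed
  have b: "t * dl t \<le> t' * slp f s' t'" if s': "t \<le> s'" "s' < t'" for s'
  proof (rule field_le_mult_one_interval)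
    fix z :: real assume z: "0 < z" "z < 1"
    have "z * t * dl t \<le> z * t * slp f (z * t) t"
      using z t dl_le[of "z * t" t] by (intro mult_left_mono) auto
    also have "\<dots> \<le> t' * slp f s' t'" using z t s' by (intro key) auto
    finally show "z * (t * dl t) \<le> t' * slp f s' t'" by (simp add: mult.assoc)
  qed
  have "t * dl t / t' \<le> dl t'"
  proof (rule dl_ge)
    show "0 < t'" using t by simp
    fix s' assume s': "0 \<le> s'" "s' < t'"
    have "t * dl t \<le> t' * slp f s' t'"
    proof (cases "t \<le> s'")
      case True then show ?thesis using b s' by auto
    next
      case False
      have "t * dl t \<le> t' * slp f t t'" using b t by auto
      also have "\<dots> \<le> t' * slp f s' t'" using False s' t by (intro mult_left_mono cslp) auto
      finally show ?thesis .
    qed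
    then show "t * dl t / t' \<le> slp f s' t'" using t by (simp add: field_simps)
  qed
  then show ?thesis using t by (simp add: field_simps)
qed

end



lemma sm_le_iff:
  fixes f :: "real \<Rightarrow> real"
  assumes "strict_mono_on {0..} f" "0 \<le> a" "0 \<le> b"
  shows "f a \<le> f b \<longleftrightarrow> a \<le> b"
proof (cases rule: linorder_cases[of a b])
  case less
  then have "f a < f b" using assms unfolding strict_mono_on_def by auto
  then show ?thesis using less by auto
next
  case greater
  then have "f b < f a" using assms unfolding strict_mono_on_def by auto
  then show ?thesis using greater by auto
qed simp

lemma sm_less_iff:
  fixes f :: "real \<Rightarrow> real"
  assumes "strict_mono_on {0..} f" "0 \<le> a" "0 \<le> b"
  shows "f a < f b \<longleftrightarrow> a < b"
  using sm_le_iff[OF assms(1,3,2)] by (metis not_le)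

lemma nf_cfun: "neighbor_fn f \<Longrightarrow> cfun f"
  unfolding neighbor_fn_def cfun_def by auto

lemma nf_surj:
  assumes nf: "neighbor_fn f" and y: "f 0 \<le> y"
  shows "\<exists>x\<ge>0. f x = y"
proof -
  have sm: "strict_mono_on {0..} f" and ct: "continuous_on {0..} f"
    and lc: "convex_on UNIV (\<lambda>x. f (exp x))" using nf unfolding neighbor_fn_def by auto
  let ?g = "\<lambda>x. f (exp x)"
  define c where "c = f 1 - f (exp (-1))"
  have c: "0 < c" unfolding c_def using sm_less_iff[OF sm, of "exp (-1)" 1] by simp
  define u where "u = max 1 ((y - f 1) / c)"
  have u: "1 \<le> u" "(y - f 1) / c \<le> u" unfolding u_def by auto
  have "slp ?g (-1) 0 \<le> slp ?g 0 u"
    by (rule convex_slp_mono[OF lc]) (use u in auto)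
  then have "c \<le> (f (exp u) - f 1) / u" unfolding slp_def c_def by simp
  then have "c * u \<le> f (exp u) - f 1" using u by (simp add: field_simps)
  moreover have "y - f 1 \<le> c * u" using u c by (simp add: field_simps)
  ultimately have "y \<le> f (exp u)" by linarith
  moreover have "continuous_on {0..exp u} f" using ct by (rule continuous_on_subset) auto
  ultimately obtain x where "0 \<le> x" "x \<le> exp u" "f x = y"
    using IVT'[of f 0 y "exp u"] y by auto
  then show ?thesis by auto
qed

lemma nf_inv:
  assumes nf: "neighbor_fn f" and x: "0 \<le> x" "f x = y"
  shows "the_inv_into {0..} f y = x"
proof -
  have sm: "strict_mono_on {0..} f" using nf unfolding neighbor_fn_def by auto
  have "inj_on f {0..}" using sm by (rule strict_mono_on_imp_inj_on)
  then show ?thesis using x by (intro the_inv_into_f_eq) auto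
qed

lemma incl:
  assumes nf: "neighbor_fn f" and nF: "neighbor_fn F" and \<sigma>: "0 < \<sigma>" and x: "0 \<le> x"
    and H: "\<And>a b. 0 \<le> a \<Longrightarrow> a \<le> b \<Longrightarrow> F b - F a \<le> (f b - f a) / \<sigma>"
  shows "unc_interval f \<sigma> x \<subseteq> unc_interval F 1 x"
proof -
  have sm: "strict_mono_on {0..} f" using nf unfolding neighbor_fn_def by auto
  have sM: "strict_mono_on {0..} F" using nF unfolding neighbor_fn_def by auto
  have fx: "f 0 \<le> f x" using sm_le_iff[OF sm, of 0 x] x by simp
  have Fx: "F 0 \<le> F x" using sm_le_iff[OF sM, of 0 x] x by simp
  obtain z where z: "0 \<le> z" "f z = max (f 0) (f x - \<sigma>)" using nf_surj[OF nf, of "max (f 0) (f x - \<sigma>)"] by auto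
  obtain y where y: "0 \<le> y" "f y = f x + \<sigma>" using nf_surj[OF nf, of "f x + \<sigma>"] fx \<sigma> by auto
  obtain w1 where w1: "0 \<le> w1" "F w1 = max (F 0) (F x - 1)" using nf_surj[OF nF, of "max (F 0) (F x - 1)"] by auto
  obtain w2 where w2: "0 \<le> w2" "F w2 = F x + 1" using nf_surj[OF nF, of "F x + 1"] Fx by auto
  have i: "the_inv_into {0..} f (max (f 0) (f x - \<sigma>)) = z" "the_inv_into {0..} f (f x + \<sigma>) = y"
    "the_inv_into {0..} F (max (F 0) (F x - 1)) = w1" "the_inv_into {0..} F (F x + 1) = w2"
    using nf_inv[OF nf z(1) z(2)] nf_inv[OF nf y(1) y(2)]
      nf_inv[OF nF w1(1) w1(2)] nf_inv[OF nF w2(1) w2(2)] by auto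
  have zx: "z \<le> x" using sm_le_iff[OF sm z(1) x] z \<sigma> fx by auto
  have "F x - F z \<le> (f x - f z) / \<sigma>" using H z(1) zx by auto
  also have "\<dots> \<le> 1" using z \<sigma> by (simp add: field_simps)
  finally have "F x - 1 \<le> F z" by simp
  moreover have "F 0 \<le> F z" using sm_le_iff[OF sM, of 0 z] z by simp
  ultimately have "F w1 \<le> F z" using w1 by simp
  then have wz: "w1 \<le> z" using sm_le_iff[OF sM w1(1) z(1)] by simp
  have xy: "x \<le> y" using sm_le_iff[OF sm x y(1)] y \<sigma> by auto
  have "F y - F x \<le> (f y - f x) / \<sigma>" using H x xy by auto
  also have "\<dots> = 1" using y \<sigma> by simp
  finally have "F y \<le> F w2" using w2 by simp
  then have yw: "y \<le> w2" using sm_le_iff[OF sM y(1) w2(1)] by simp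
  show ?thesis unfolding unc_interval_def i using wz yw by auto
qed



lemma negligible_countable_real: "countable (S::real set) \<Longrightarrow> negligible S"
proof -
  assume "countable S"
  then have "negligible (\<Union>((\<lambda>x. {x}) ` S))" by (intro negligible_countable_Union) auto
  then show ?thesis by simp
qed

locale two =
  fixes pA pB :: "real \<Rightarrow> real" and sA sB :: real
  assumes nA: "neighbor_fn pA" and nB: "neighbor_fn pB" and sA: "sA > 0" and sB: "sB > 0"
begin

sublocale A: cfun pA by (rule nf_cfun[OF nA])
sublocale B: cfun pB by (rule nf_cfun[OF nB])

definition g :: "real \<Rightarrow> real" where
  "g x = (if 0 < x then min (A.dl x / sA) (B.dl x / sB) else 0)"

lemma g_pos: "0 < x \<Longrightarrow> 0 < g x"
  unfolding g_def using A.dl_pos B.dl_pos sA sB by auto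

lemma g_nonneg: "0 \<le> x \<Longrightarrow> 0 \<le> g x"
  using g_pos[of x] unfolding g_def by (cases "x = 0") auto

lemma g_mono: "0 < x \<Longrightarrow> x \<le> y \<Longrightarrow> g y \<le> g x"
proof -
  assume xy: "0 < x" "x \<le> y"
  have "A.dl y / sA \<le> A.dl x / sA" using A.dl_mono[OF xy] sA by (simp add: divide_right_mono)
  moreover have "B.dl y / sB \<le> B.dl x / sB" using B.dl_mono[OF xy] sB by (simp add: divide_right_mono)
  ultimately show ?thesis unfolding g_def using xy by auto
qed

lemma g_tmono: "0 < x \<Longrightarrow> x \<le> y \<Longrightarrow> x * g x \<le> y * g y"
proof -
  assume xy: "0 < x" "x \<le> y"
  have lA: "convex_on UNIV (\<lambda>x. pA (exp x))" and lB: "convex_on UNIV (\<lambda>x. pB (exp x))"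
    using nA nB unfolding neighbor_fn_def by auto
  have "x * A.dl x \<le> y * A.dl y" using A.tdl_mono[OF lA xy(1)] xy by (cases "x = y") auto
  then have a: "x * (A.dl x / sA) \<le> y * (A.dl y / sA)" using sA
    by (metis divide_right_mono less_imp_le times_divide_eq_right)
  have "x * B.dl x \<le> y * B.dl y" using B.tdl_mono[OF lB xy(1)] xy by (cases "x = y") auto
  then have b: "x * (B.dl x / sB) \<le> y * (B.dl y / sB)" using sB
    by (metis divide_right_mono less_imp_le times_divide_eq_right)
  have "x * g x = min (x * (A.dl x / sA)) (x * (B.dl x / sB))"
    unfolding g_def using xy by (simp add: min_mult_distrib_left)
  moreover have "y * g y = min (y * (A.dl y / sA)) (y * (B.dl y / sB))"
    unfolding g_def using xy by (simp add: min_mult_distrib_left)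
  ultimately show ?thesis using a b by linarith
qed

lemma g_leA: "0 < x \<Longrightarrow> g x \<le> A.dl x / sA" unfolding g_def by auto
lemma g_leB: "0 < x \<Longrightarrow> g x \<le> B.dl x / sB" unfolding g_def by auto

lemma g_int_pos: "0 < a \<Longrightarrow> g integrable_on {a..b}"
proof -
  assume a: "0 < a"
  have "mono_on {a..b} (\<lambda>x. - g x)"
    by (rule mono_onI) (use a g_mono in force)
  from integrable_neg[OF integrable_on_mono_on[OF this]] show ?thesis by simp
qed

lemma g_int_le_pos:
  assumes a: "0 < a" "a \<le> b"
  shows "integral {a..b} g \<le> (pA b - pA a) / sA" "integral {a..b} g \<le> (pB b - pB a) / sB"
proof -
  have "integral {a..b} g \<le> integral {a..b} (\<lambda>x. A.dl x / sA)"
    using a by (intro integral_le g_int_pos integrable_on_divide A.dl_integrable g_leA) auto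
  also have "\<dots> = integral {a..b} A.dl / sA" by simp
  also have "\<dots> \<le> (pA b - pA a) / sA" using A.ftc_le[OF a] sA by (simp add: divide_right_mono)
  finally show "integral {a..b} g \<le> (pA b - pA a) / sA" .
  have "integral {a..b} g \<le> integral {a..b} (\<lambda>x. B.dl x / sB)"
    using a by (intro integral_le g_int_pos integrable_on_divide B.dl_integrable g_leB) auto
  also have "\<dots> = integral {a..b} B.dl / sB" by simp
  also have "\<dots> \<le> (pB b - pB a) / sB" using B.ftc_le[OF a] sB by (simp add: divide_right_mono)
  finally show "integral {a..b} g \<le> (pB b - pB a) / sB" .
qed


lemma g_int0:
  assumes b: "0 < b"
  shows "g integrable_on {0..b}" "integral {0..b} g \<le> (pA b - pA 0) / sA"
    "integral {0..b} g \<le> (pB b - pB 0) / sB"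
proof -
  define c where "c k = b / real (Suc k)" for k
  have c: "0 < c k" "c k \<le> b" for k unfolding c_def using b by (auto simp: field_simps)
  have cmono: "c (Suc k) \<le> c k" for k unfolding c_def using b by (auto simp: field_simps)
  have clim: "c \<longlonglongrightarrow> 0" unfolding c_def using LIMSEQ_Suc[OF lim_const_over_n[of b]] by simp
  define fk where "fk k x = (if x \<in> {c k..} then g x else 0)" for k x
  have set: "{c k..} \<inter> {0..b} = {c k..b}" for k using c[of k] by auto
  have int: "fk k integrable_on {0..b}" for k
    unfolding fk_def integrable_restrict_Int set using c by (intro g_int_pos) auto
  have integ: "integral {0..b} (fk k) = integral {c k..b} g" for k
    unfolding fk_def integral_restrict_Int set ..
  have mono: "fk k x \<le> fk (Suc k) x" if "x \<in> {0..b}" for k x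
    using cmono[of k] g_nonneg[of x] that unfolding fk_def by auto
  have lim: "(\<lambda>k. fk k x) \<longlonglongrightarrow> g x" if x: "x \<in> {0..b}" for x
  proof (cases "x = 0")
    case True
    then have "fk k x = g x" for k using c[of k] unfolding fk_def g_def by auto
    then show ?thesis by simp
  next
    case False
    then have "x > 0" using x by auto
    then have "eventually (\<lambda>k. c k < x) sequentially" using order_tendstoD(2)[OF clim] by blast
    then have "eventually (\<lambda>k. fk k x = g x) sequentially"
      by eventually_elim (auto simp: fk_def)
    then show ?thesis by (rule tendsto_eventually)
  qed
  have leA: "integral {c k..b} g \<le> (pA b - pA (c k)) / sA" for k
    using c[of k] by (intro g_int_le_pos) auto
  have leB: "integral {c k..b} g \<le> (pB b - pB (c k)) / sB" for k
    using c[of k] by (intro g_int_le_pos) auto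
  have ge0: "0 \<le> integral {c k..b} g" for k
    using c[of k] by (intro integral_nonneg g_int_pos g_nonneg) auto
  have pA0: "pA 0 \<le> pA (c k)" for k using sm_le_iff[OF A.smono, of 0 "c k"] c[of k] by auto
  have "bounded (range (\<lambda>k. integral {0..b} (fk k)))"
    unfolding bounded_iff
  proof (intro exI[of _ "(pA b - pA 0) / sA"] ballI)
    fix y assume "y \<in> range (\<lambda>k. integral {0..b} (fk k))"
    then obtain k where k: "y = integral {c k..b} g" using integ by auto
    have "(pA b - pA (c k)) / sA \<le> (pA b - pA 0) / sA" using pA0[of k] sA by (simp add: divide_right_mono)
    then show "norm y \<le> (pA b - pA 0) / sA" using k leA[of k] ge0[of k] by auto
  qed
  from monotone_convergence_increasing[OF int mono lim this]
  have mc: "g integrable_on {0..b}" "(\<lambda>k. integral {c k..b} g) \<longlonglongrightarrow> integral {0..b} g"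
    unfolding integ by auto
  show "g integrable_on {0..b}" by (rule mc(1))
  have cA: "continuous_on {0..} pA" and cB: "continuous_on {0..} pB" using A.cont B.cont .
  have tA: "(\<lambda>k. pA (c k)) \<longlonglongrightarrow> pA 0"
    by (rule continuous_on_tendsto_compose[OF cA clim]) (use c in \<open>auto intro!: always_eventually less_imp_le\<close>)
  have tB: "(\<lambda>k. pB (c k)) \<longlonglongrightarrow> pB 0"
    by (rule continuous_on_tendsto_compose[OF cB clim]) (use c in \<open>auto intro!: always_eventually less_imp_le\<close>)
  have "(\<lambda>k. (pA b - pA (c k)) / sA) \<longlonglongrightarrow> (pA b - pA 0) / sA" using sA by (intro tendsto_intros tA) auto
  then show "integral {0..b} g \<le> (pA b - pA 0) / sA"
    using LIMSEQ_le[OF mc(2)] leA by blast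
  have "(\<lambda>k. (pB b - pB (c k)) / sB) \<longlonglongrightarrow> (pB b - pB 0) / sB" using sB by (intro tendsto_intros tB) auto
  then show "integral {0..b} g \<le> (pB b - pB 0) / sB"
    using LIMSEQ_le[OF mc(2)] leB by blast
qed

lemma g_int: assumes "0 \<le> a" shows "g integrable_on {a..b}"
proof (cases "a < b")
  case True
  then have "g integrable_on {0..b}" using assms g_int0 by auto
  then show ?thesis by (rule integrable_on_subinterval) (use assms in auto)
next
  case False
  then have "negligible {a..b}"
    by (intro negligible_subset[OF negligible_sing[of a]]) auto
  then show ?thesis by (rule integrable_negligible)
qed

definition F :: "real \<Rightarrow> real" where "F x = integral {0..x} g"

lemma F0: "F 0 = 0" unfolding F_def by simp

lemma F_diff: "0 \<le> a \<Longrightarrow> a \<le> b \<Longrightarrow> F b - F a = integral {a..b} g"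
  unfolding F_def using Henstock_Kurzweil_Integration.integral_combine[of 0 a b g] g_int[of 0 b] by auto

lemma F_le:
  assumes "0 \<le> a" "a \<le> b"
  shows "F b - F a \<le> (pA b - pA a) / sA" "F b - F a \<le> (pB b - pB a) / sB"
proof -
  have "F b - F a \<le> (pA b - pA a) / sA \<and> F b - F a \<le> (pB b - pB a) / sB"
  proof (cases "a = 0")
    case False
    then show ?thesis using assms F_diff g_int_le_pos[of a b] by auto
  next
    case True
    show ?thesis
    proof (cases "b = 0")
      case False
      then show ?thesis using True assms F_diff g_int0[of b] by auto
    qed (use True in simp)
  qed
  then show "F b - F a \<le> (pA b - pA a) / sA" "F b - F a \<le> (pB b - pB a) / sB" by auto
qed

lemma F_cont: "continuous_on {0..} F"
proof (rule continuous_on_eq_continuous_within[THEN iffD2], rule ballI)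
  fix x :: real assume x: "x \<in> {0..}"
  have "continuous_on {0..x+1} F"
    unfolding F_def by (rule indefinite_integral_continuous_1) (rule g_int, simp)
  then have "continuous (at x within {0..x+1}) F"
    using x by (simp add: continuous_on_eq_continuous_within)
  moreover have "at x within {0..} = at x within {0..x+1}"
    by (rule at_within_nhd[of x "{..<x+1}"]) auto
  ultimately show "continuous (at x within {0..}) F" by simp
qed

lemma F_smono: "strict_mono_on {0..} F"
proof (rule strict_mono_onI)
  fix a b :: real assume ab: "a \<in> {0..}" "b \<in> {0..}" "a < b"
  define m where "m = (a + b) / 2"
  have m: "a < m" "m < b" "0 < m" using ab unfolding m_def by auto
  have "integral {a..m} g + integral {m..b} g = integral {a..b} g"
    using m ab by (intro Henstock_Kurzweil_Integration.integral_combine g_int) auto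
  moreover have "0 \<le> integral {a..m} g" using ab by (intro integral_nonneg g_int g_nonneg) auto
  moreover have "integral {m..b} (\<lambda>_. g b) \<le> integral {m..b} g"
    using m by (intro integral_le g_int g_mono) auto
  moreover have "integral {m..b} (\<lambda>_. g b) = (b - m) * g b" using m by simp
  moreover have "0 < (b - m) * g b" using m g_pos[of b] by simp
  ultimately have "0 < integral {a..b} g" by linarith
  then show "F a < F b" using F_diff[of a b] ab by auto
qed


lemma F_conc: "concave_on {0..} F"
proof (rule concave_on_linorderI)
  show "convex {0::real..}" by simp
  fix t x y :: real assume t: "0 < t" "t < 1" and xy: "x \<in> {0..}" "y \<in> {0..}" "x < y"
  define m where "m = (1 - t) * x + t * y"
  have mx: "m - x = t * (y - x)" "y - m = (1 - t) * (y - x)" unfolding m_def by (simp_all add: algebra_simps)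
  have tp: "0 < t * (y - x)" using t xy by simp
  have tq: "0 < (1 - t) * (y - x)" using t xy by simp
  have m1: "x < m" using tp mx(1) by linarith
  have m2: "m < y" using tq mx(2) by linarith
  have m3: "0 < m" using m1 xy by simp
  note m = m1 m2 m3
  define g' where "g' s = (if s = 0 then g m else g s)" for s
  have sp: "integral {x..m} g' = integral {x..m} g"
    by (rule integral_spike[of "{0}"]) (auto simp: g'_def)
  have gi: "g' integrable_on {x..m}"
    by (rule integrable_spike[OF g_int[of x m] negligible_sing[of 0]]) (use xy in \<open>auto simp: g'_def\<close>)
  have "integral {x..m} (\<lambda>_. g m) \<le> integral {x..m} g'"
  proof (rule integral_le[OF integrable_const_ivl gi])
    fix s assume s: "s \<in> {x..m}"
    show "g m \<le> g' s"
    proof (cases "s = 0")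
      case False then show ?thesis unfolding g'_def using s xy by (auto intro!: g_mono)
    qed (simp add: g'_def)
  qed
  then have lo: "(m - x) * g m \<le> F m - F x"
    using sp F_diff[of x m] m xy by simp
  have "integral {m..y} g \<le> integral {m..y} (\<lambda>_. g m)"
    by (rule integral_le[OF g_int integrable_const_ivl]) (use m in \<open>auto intro!: g_mono\<close>)
  then have hi: "F y - F m \<le> (y - m) * g m"
    using F_diff[of m y] m by simp
  have 1: "(1 - t) * ((m - x) * g m) \<le> (1 - t) * (F m - F x)" using lo t by (intro mult_left_mono) auto
  have 2: "t * (F y - F m) \<le> t * ((y - m) * g m)" using hi t by (intro mult_left_mono) auto
  have 3: "(1 - t) * ((m - x) * g m) = t * ((y - m) * g m)" unfolding mx by (simp add: algebra_simps)
  have e1: "(1 - t) * (F m - F x) = F m - F x - t * F m + t * F x" by (simp add: algebra_simps)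
  have e2: "t * (F y - F m) = t * F y - t * F m" by (simp add: algebra_simps)
  have "(1 - t) * F x + t * F y \<le> F m" using 1 2 3 e1 e2 by (simp add: algebra_simps)
  then show "(1 - t) * F x + t * F y \<le> F ((1 - t) *\<^sub>R x + t *\<^sub>R y)" by (simp add: m_def)
qed

lemma int_inv:
  fixes p q c :: real
  assumes "0 < p" "p \<le> q"
  shows "((\<lambda>s. c / s) has_integral (c * ln q - c * ln p)) {p..q}"
proof -
  have "((\<lambda>s. c * ln s) has_vector_derivative c / x) (at x within {p..q})" if "x \<in> {p..q}" for x
  proof -
    have "((\<lambda>s. c * ln s) has_real_derivative c * (1 / x)) (at x)"
      using that assms by (auto intro!: derivative_eq_intros)
    then show ?thesis
      by (simp add: has_real_derivative_iff_has_vector_derivative has_vector_derivative_at_within)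
  qed
  from fundamental_theorem_of_calculus[OF assms(2) this] show ?thesis by simp
qed

lemma F_lconv: "convex_on UNIV (\<lambda>x. F (exp x))"
proof (rule convex_on_linorderI)
  show "convex (UNIV :: real set)" by simp
  fix t u v :: real assume t: "0 < t" "t < 1" and uv: "u < v"
  define w where "w = (1 - t) * u + t * v"
  have wu: "w - u = t * (v - u)" "v - w = (1 - t) * (v - u)" unfolding w_def by (simp_all add: algebra_simps)
  have tp: "0 < t * (v - u)" using t uv by simp
  have tq: "0 < (1 - t) * (v - u)" using t uv by simp
  have w1: "u < w" using tp wu(1) by linarith
  have w2: "w < v" using tq wu(2) by linarith
  note w = w1 w2
  define p where "p = exp u"
  define q where "q = exp w"
  define r where "r = exp v"
  have pqr: "0 < p" "p < q" "q < r" using w unfolding p_def q_def r_def by auto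
  define c where "c = q * g q"
  have c0: "0 \<le> c" unfolding c_def using g_pos[of q] pqr by simp
  have "integral {p..q} g \<le> integral {p..q} (\<lambda>s. c / s)"
  proof (rule integral_le[OF g_int])
    show "(\<lambda>s. c / s) integrable_on {p..q}" using int_inv[of p q c] pqr unfolding integrable_on_def by force
    fix s assume s: "s \<in> {p..q}"
    then have "s * g s \<le> c" unfolding c_def using pqr by (intro g_tmono) auto
    then show "g s \<le> c / s" using s pqr by (simp add: pos_le_divide_eq mult.commute)
  qed (use pqr in auto)
  also have "\<dots> = c * ln q - c * ln p" using int_inv[of p q c] pqr by (simp add: integral_unique)
  also have "\<dots> = c * (w - u)" unfolding p_def q_def by (simp add: algebra_simps)
  finally have lo: "F q - F p \<le> c * (w - u)" using F_diff[of p q] pqr by simp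
  have "integral {q..r} (\<lambda>s. c / s) \<le> integral {q..r} g"
  proof (rule integral_le[OF _ g_int])
    show "(\<lambda>s. c / s) integrable_on {q..r}" using int_inv[of q r c] pqr unfolding integrable_on_def by force
    fix s assume s: "s \<in> {q..r}"
    then have "c \<le> s * g s" unfolding c_def using pqr by (intro g_tmono) auto
    then show "c / s \<le> g s" using s pqr by (simp add: pos_divide_le_eq mult.commute)
  qed (use pqr in auto)
  moreover have "integral {q..r} (\<lambda>s. c / s) = c * ln r - c * ln q" using int_inv[of q r c] pqr by (simp add: integral_unique)
  moreover have "c * ln r - c * ln q = c * (v - w)" unfolding r_def q_def by (simp add: algebra_simps)
  ultimately have hi: "c * (v - w) \<le> F r - F q" using F_diff[of q r] pqr by simp
  have 1: "(1 - t) * (F q - F p) \<le> (1 - t) * (c * (w - u))" using lo t by (intro mult_left_mono) auto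
  have 2: "t * (c * (v - w)) \<le> t * (F r - F q)" using hi t by (intro mult_left_mono) auto
  have 3: "(1 - t) * (c * (w - u)) = t * (c * (v - w))" unfolding wu by (simp add: algebra_simps)
  have "F q \<le> (1 - t) * F p + t * F r" using 1 2 3 by (simp add: algebra_simps)
  then show "F (exp ((1 - t) *\<^sub>R u + t *\<^sub>R v)) \<le> (1 - t) * F (exp u) + t * F (exp v)"
    by (simp add: p_def q_def r_def w_def)
qed

lemma F_nf: "neighbor_fn F"
  unfolding neighbor_fn_def using F_smono F_cont F_conc F_lconv by auto

end



lemma c1_nf:
  assumes nf: "neighbor_fn f"
  shows "c1_ae_on {0..} f"
proof -
  interpret cfun f by (rule nf_cfun[OF nf])
  define N where "N = insert 0 NN"
  have "countable N" unfolding N_def using countable_NN by simp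
  then have N: "N \<in> null_sets lborel" by (rule countable_imp_null_set_lborel)
  have T: "0 < x" "dr x = dl x" if "x \<in> {0..} - N" for x
    using that unfolding N_def NN_def by auto
  have D: "deriv f x = dl x" "f differentiable (at x)" if "x \<in> {0..} - N" for x
  proof -
    have d: "(f has_real_derivative dl x) (at x)" using has_deriv_dl[OF T[OF that]] .
    show "deriv f x = dl x" using DERIV_imp_deriv[OF d] .
    show "f differentiable (at x)" using d DERIV_imp_deriv[OF d] DERIV_deriv_iff_real_differentiable by metis
  qed
  have "continuous_on ({0..} - N) (deriv f)"
    unfolding continuous_on_iff
  proof (intro ballI allI impI)
    fix x and e :: real assume x: "x \<in> {0..} - N" and e: "0 < e"
    obtain d where d: "d > 0" "\<And>y. 0 < y \<Longrightarrow> \<bar>y - x\<bar> < d \<Longrightarrow> \<bar>dl y - dl x\<bar> < e"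
      using dl_cont[OF T[OF x] e] by blast
    show "\<exists>d>0. \<forall>x'\<in>{0..} - N. dist x' x < d \<longrightarrow> dist (deriv f x') (deriv f x) < e"
    proof (intro exI[of _ d] conjI ballI impI)
      fix y assume y: "y \<in> {0..} - N" "dist y x < d"
      show "dist (deriv f y) (deriv f x) < e"
        using d(2)[of y] T[OF y(1)] y(2) D(1)[OF x] D(1)[OF y(1)] by (simp add: dist_real_def)
    qed (use d in auto)
  qed
  then show ?thesis unfolding c1_ae_on_def using N D(2) by blast
qed

context two
begin

lemma psi_eq:
  "(\<lambda>x. integral {0..x} (\<lambda>s. min ((1 / sA) * deriv pA s) ((1 / sB) * deriv pB s))) = F"
proof
  fix x
  have neg: "negligible (insert 0 (A.NN \<union> B.NN))"
    using A.countable_NN B.countable_NN by (intro negligible_countable_real) auto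
  show "integral {0..x} (\<lambda>s. min ((1 / sA) * deriv pA s) ((1 / sB) * deriv pB s)) = F x"
    unfolding F_def
  proof (rule integral_spike[OF neg])
    fix s assume s: "s \<in> {0..x} - insert 0 (A.NN \<union> B.NN)"
    then have s0: "0 < s" "A.dr s = A.dl s" "B.dr s = B.dl s" unfolding A.NN_def B.NN_def by auto
    have "deriv pA s = A.dl s" using DERIV_imp_deriv[OF A.has_deriv_dl[OF s0(1,2)]] .
    moreover have "deriv pB s = B.dl s" using DERIV_imp_deriv[OF B.has_deriv_dl[OF s0(1,3)]] .
    ultimately show "g s = min ((1 / sA) * deriv pA s) ((1 / sB) * deriv pB s)"
      unfolding g_def using s0 by simp
  qed
qed

end

theorem theorem5p7:
  fixes \<psi>A \<psi>B :: "real \<Rightarrow> real" and \<sigma>A \<sigma>B :: real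
  assumes "neighbor_fn \<psi>A" and "neighbor_fn \<psi>B"
    and "\<sigma>A > 0" and "\<sigma>B > 0"
  defines "\<psi>s \<equiv> (\<lambda>x. integral {0..x}
              (\<lambda>s. min ((1 / \<sigma>A) * deriv \<psi>A s) ((1 / \<sigma>B) * deriv \<psi>B s)))"
  shows "c1_ae_on {0..} \<psi>A \<and> c1_ae_on {0..} \<psi>B \<and>
         neighbor_fn \<psi>s \<and>
         (\<forall>x\<ge>0. unc_interval \<psi>A \<sigma>A x \<subseteq> unc_interval \<psi>s 1 x \<and>
                 unc_interval \<psi>B \<sigma>B x \<subseteq> unc_interval \<psi>s 1 x)"
proof -
  interpret T: two \<psi>A \<psi>B \<sigma>A \<sigma>B by unfold_locales (use assms in auto)
  have e: "\<psi>s = T.F" unfolding \<psi>s_def by (rule T.psi_eq)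
  have i: "unc_interval \<psi>A \<sigma>A x \<subseteq> unc_interval \<psi>s 1 x \<and>
           unc_interval \<psi>B \<sigma>B x \<subseteq> unc_interval \<psi>s 1 x" if x: "0 \<le> x" for x
    unfolding e using incl[OF assms(1) T.F_nf assms(3) x T.F_le(1)] incl[OF assms(2) T.F_nf assms(4) x T.F_le(2)]
    by auto
  show ?thesis using c1_nf[OF assms(1)] c1_nf[OF assms(2)] T.F_nf i unfolding e by auto
qed

end
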